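(* For each $n$, consider the functions ${\operatorname{mr}}_+,\ {\operatorname{mr}}:\mathbf S_{n,+}\to\{0,1,\dots,n\}$ defined by \[{\operatorname{mr}}_+(\Sigma)=\min\{\operatorname{rank}(\hat\Sigma)\mid \Sigma=\tilde\Sigma+\hat\Sigma,\ \tilde\Sigma\ge 0,\ \hat\Sigma\ge 0,\ \tilde\Sigma\text{ diagonal}\},\] \[{\operatorname{mr}}(\Sigma)=\min\{\operatorname{rank}(\hat\Sigma)\mid \Sigma=\tilde\Sigma+\hat\Sigma,\ \hat\Sigma\ge 0,\ \tilde\Sigma\text{ diagonal}\}\] (in the second, $\tilde\Sigma$ is a real diagonal matrix not required to be positive semidefinite). Then ${\operatorname{mr}}_+$ is lower semicontinuous, whereas ${\operatorname{mr}}$ is not lower semicontinuous (in general).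
   Context: $\mathbf S_n$ denotes the real symmetric $n\times n$ matrices and $\mathbf S_{n,+}$ the positive semidefinite ones; $M\ge 0$ means $M$ is positive semidefinite. All matrices $\tilde\Sigma,\hat\Sigma$ are real symmetric $n\times n$. *)

theory Defs
  imports "HOL-Analysis.Analysis" "HOL-Library.Numeral_Type"
begin

definition symmetric_mat :: "real^'n^'n \<Rightarrow> bool" where
  "symmetric_mat A \<longleftrightarrow> transpose A = A"

definition psd :: "real^'n^'n \<Rightarrow> bool" where
  "psd A \<longleftrightarrow> symmetric_mat A \<and> (\<forall>x. 0 \<le> x \<bullet> (A *v x))"

definition diagonal_mat :: "real^'n^'n \<Rightarrow> bool" where
  "diagonal_mat A \<longleftrightarrow> (\<forall>i j. i \<noteq> j \<longrightarrow> A $ i $ j = 0)"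

definition psd_set :: "(real^'n^'n) set" where
  "psd_set = {A. psd A}"

definition mr_plus :: "real^'n^'n \<Rightarrow> nat" where
  "mr_plus S = Min {rank H | D H. S = D + H \<and> psd D \<and> psd H \<and> diagonal_mat D}"

definition mr :: "real^'n^'n \<Rightarrow> nat" where
  "mr S = Min {rank H | D H. S = D + H \<and> psd H \<and> diagonal_mat D}"

definition lower_semicontinuous_on :: "'a::topological_space set \<Rightarrow> ('a \<Rightarrow> real) \<Rightarrow> bool" where
  "lower_semicontinuous_on S f \<longleftrightarrow>
     (\<forall>x\<in>S. \<forall>t. t < f x \<longrightarrow> (\<forall>\<^sub>F y in at x within S. t < f y))"

end

theory Submission imports Defs "HOL-Library.Infinite_Set" begin

lemma norm_mat_vec_le:
  fixes A :: "real^'n^'m"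
  shows "norm (A *v x) \<le> real CARD('m) * real CARD('n) * norm A * norm x"
proof -
  have c: "\<bar>A$i$j\<bar> \<le> norm A" for i j
    using component_le_norm_cart[of "A$i" j] Finite_Cartesian_Product.norm_nth_le[of A i] by linarith
  have o: "onorm ((*v) A) \<le> real CARD('m) * real CARD('n) * norm A"
    by (rule onorm_le_matrix_component) (rule c)
  have "norm (A *v x) \<le> onorm ((*v) A) * norm x"
    by (rule onorm) (rule matrix_vector_mul_bounded_linear)
  also have "\<dots> \<le> real CARD('m) * real CARD('n) * norm A * norm x"
    by (rule mult_right_mono[OF o]) simp
  finally show ?thesis .
qed

lemma rank_lsc:
  fixes H :: "real^'n^'m"
  shows "\<exists>d>0. \<forall>H'. dist H' H < d \<longrightarrow> rank H \<le> rank H'"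
proof -
  define S where "S = span (rows H)"
  have sub: "subspace S" "closed S" unfolding S_def by (auto intro: closed_subspace)
  have inj0: "\<forall>x\<in>S. H *v x = 0 \<longrightarrow> x = 0"
    using matrix_vector_mul_injective_on_rowspace[of H _ 0] unfolding S_def
    by (metis matrix_vector_mult_0_right span_zero)
  obtain e where e: "e > 0" "\<forall>x\<in>S. norm (H *v x) \<ge> e * norm x"
    using injective_imp_isometric[OF sub(2) sub(1) matrix_vector_mul_bounded_linear inj0] by blast
  define C where "C = real CARD('m) * real CARD('n)"
  have C: "C > 0" unfolding C_def by simp
  define d where "d = e / C"
  have d: "d > 0" using e C by (simp add: d_def)
  show ?thesis
  proof (intro exI[of _ d] conjI allI impI d)
    fix H' :: "real^'n^'m" assume dH: "dist H' H < d"
    have kern: "x = 0" if "x \<in> S" "H' *v x = 0" for x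
    proof (rule ccontr)
      assume x0: "x \<noteq> 0"
      have "H *v x = (H - H') *v x" using that(2) by (simp add: matrix_vector_mult_diff_rdistrib)
      then have "norm (H *v x) \<le> C * norm (H - H') * norm x"
        using norm_mat_vec_le[of "H - H'" x] by (simp add: C_def)
      also have "\<dots> < C * d * norm x"
        using dH x0 C by (simp add: dist_norm norm_minus_commute)
      also have "\<dots> = e * norm x" using C by (simp add: d_def)
      finally show False using e(2) that(1) by fastforce
    qed
    have spS: "span S = S" using sub(1) by (rule span_eq_iff[THEN iffD2])
    have injS: "inj_on ((*v) H') (span S)"
    proof (rule inj_onI)
      fix x y assume xy: "x \<in> span S" "y \<in> span S" "H' *v x = H' *v y"
      have "x \<in> S" "y \<in> S" using xy(1,2) spS by simp_all
      then have "x - y \<in> S" using subspace_diff[OF sub(1)] by blast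
      moreover have "H' *v (x - y) = 0" using xy(3) by (simp add: matrix_vector_mult_diff_distrib)
      ultimately have "x - y = 0" by (rule kern)
      then show "x = y" by simp
    qed
    have "rank H = dim S" unfolding S_def by (rule trans[OF row_rank_def dim_span[symmetric]])
    also have "\<dots> = dim ((*v) H' ` S)"
      by (rule dim_image_eq[OF matrix_vector_mul_linear injS, symmetric])
    also have "\<dots> \<le> dim (range (\<lambda>x. H' *v x))" by (rule dim_subset) blast
    also have "\<dots> = rank H'" by (rule rank_dim_range[symmetric])
    finally show "rank H \<le> rank H'" .
  qed
qed


lemma psd_zero: "psd (0::real^'n^'n)"
  by (simp add: psd_def symmetric_mat_def transpose_def vec_eq_iff)

lemma diag_zero: "diagonal_mat (0::real^'n^'n)"
  by (simp add: diagonal_mat_def)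

lemma rank_le_card: "rank (H::real^'n^'n) \<le> CARD('n)"
  using rank_bound[of H] by simp

lemma mrp_finite: "finite {rank H | D H. (S::real^'n^'n) = D + H \<and> psd D \<and> psd H \<and> diagonal_mat D}"
  by (rule finite_subset[of _ "{..CARD('n)}"]) (auto simp: rank_le_card)

lemma mr_finite: "finite {rank H | D H. (S::real^'n^'n) = D + H \<and> psd H \<and> diagonal_mat D}"
  by (rule finite_subset[of _ "{..CARD('n)}"]) (auto simp: rank_le_card)

lemma mrp_in:
  fixes S :: "real^'n^'n"
  assumes "psd S"
  shows "mr_plus S \<in> {rank H | D H. S = D + H \<and> psd D \<and> psd H \<and> diagonal_mat D}"
proof -
  have "rank S \<in> {rank H | D H. S = D + H \<and> psd D \<and> psd H \<and> diagonal_mat D}"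
    using assms psd_zero diag_zero by force
  then show ?thesis unfolding mr_plus_def by (intro Min_in mrp_finite) auto
qed

lemma mrp_le:
  fixes S :: "real^'n^'n"
  assumes "S = D + H" "psd D" "psd H" "diagonal_mat D"
  shows "mr_plus S \<le> rank H"
  unfolding mr_plus_def by (rule Min_le[OF mrp_finite]) (use assms in blast)

lemma mr_ne:
  fixes S :: "real^'n^'n"
  assumes "psd S"
  shows "{rank H | D H. S = D + H \<and> psd H \<and> diagonal_mat D} \<noteq> {}"
  using assms diag_zero by force

lemma mr_le:
  fixes S :: "real^'n^'n"
  assumes "S = D + H" "psd H" "diagonal_mat D"
  shows "mr S \<le> rank H"
  unfolding mr_def by (rule Min_le[OF mr_finite]) (use assms in blast)

lemma psd_diag_nonneg:
  fixes A :: "real^'n^'n"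
  assumes "psd A"
  shows "0 \<le> A $ i $ i"
proof -
  have "axis i 1 \<bullet> (A *v axis i 1) = A $ i $ i"
    by (simp add: matrix_vector_mult_basis column_def inner_axis')
  then show ?thesis using assms unfolding psd_def by metis
qed

lemma quad_form_sum:
  fixes M :: "real^'n^'n"
  shows "x \<bullet> (M *v x) = (\<Sum>i\<in>UNIV. \<Sum>j\<in>UNIV. x$i * (M$i$j * x$j))"
  by (simp add: inner_vec_def matrix_vector_mult_def sum_distrib_left)

lemma psd_limit:
  fixes A :: "nat \<Rightarrow> real^'n^'n"
  assumes lim: "A \<longlonglongrightarrow> L" and p: "\<And>k. psd (A k)"
  shows "psd L"
proof -
  have comp: "(\<lambda>k. A k $ i $ j) \<longlonglongrightarrow> L $ i $ j" for i j
    by (intro tendsto_vec_nth lim)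
  have sym: "A k $ i $ j = A k $ j $ i" for k i j
  proof -
    have "transpose (A k) = A k" using p[of k] by (simp add: psd_def symmetric_mat_def)
    then have "transpose (A k) $ j $ i = A k $ j $ i" by simp
    then show ?thesis by (simp add: transpose_def)
  qed
  have "L $ i $ j = L $ j $ i" for i j
  proof -
    have "(\<lambda>k. A k $ i $ j) \<longlonglongrightarrow> L $ j $ i" using comp[of j i] by (simp add: sym)
    then show ?thesis using comp[of i j] LIMSEQ_unique by blast
  qed
  then have "symmetric_mat L" by (simp add: symmetric_mat_def transpose_def vec_eq_iff)
  moreover have "0 \<le> x \<bullet> (L *v x)" for x
  proof -
    have "(\<lambda>k. x \<bullet> (A k *v x)) \<longlonglongrightarrow> x \<bullet> (L *v x)"
      unfolding quad_form_sum by (intro tendsto_intros comp)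
    moreover have "\<forall>k. 0 \<le> x \<bullet> (A k *v x)" using p by (simp add: psd_def)
    ultimately show ?thesis by (intro LIMSEQ_le_const) auto
  qed
  ultimately show ?thesis by (simp add: psd_def)
qed

lemma diag_limit:
  fixes A :: "nat \<Rightarrow> real^'n^'n"
  assumes lim: "A \<longlonglongrightarrow> L" and p: "\<And>k. diagonal_mat (A k)"
  shows "diagonal_mat L"
  unfolding diagonal_mat_def
proof (intro allI impI)
  fix i j :: 'n assume "i \<noteq> j"
  have "(\<lambda>k. A k $ i $ j) \<longlonglongrightarrow> L $ i $ j" by (intro tendsto_vec_nth lim)
  moreover have "(\<lambda>k. A k $ i $ j) = (\<lambda>k. 0)" using p \<open>i \<noteq> j\<close> by (simp add: diagonal_mat_def)
  ultimately show "L $ i $ j = 0" using LIMSEQ_unique tendsto_const by metis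
qed

lemma norm_D_le:
  fixes D H G :: "real^'n^'n"
  assumes "G = D + H" "psd D" "psd H" "diagonal_mat D"
  shows "norm D \<le> norm G"
proof (rule norm_le_componentwise_cart)
  fix i
  show "norm (D $ i) \<le> norm (G $ i)"
  proof (rule norm_le_componentwise_cart)
    fix j
    show "norm (D $ i $ j) \<le> norm (G $ i $ j)"
    proof (cases "i = j")
      case True
      then show ?thesis using psd_diag_nonneg[OF assms(2), of i] psd_diag_nonneg[OF assms(3), of i] assms(1)
        by simp
    next
      case False
      then show ?thesis using assms(4) by (simp add: diagonal_mat_def)
    qed
  qed
qed

lemma core:
  fixes g D H :: "nat \<Rightarrow> real^'n^'n"
  assumes gS: "g \<longlonglongrightarrow> S"
    and DH: "\<And>k. g k = D k + H k \<and> psd (D k) \<and> psd (H k) \<and> diagonal_mat (D k)"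
  shows "\<exists>Dl Hl k. S = Dl + Hl \<and> psd Dl \<and> psd Hl \<and> diagonal_mat Dl \<and> rank Hl \<le> rank (H k)"
proof -
  obtain B where B: "\<forall>x\<in>range g. norm x \<le> B"
    using convergent_imp_bounded[OF gS] by (auto simp: bounded_iff)
  have "norm (D k) \<le> B" for k
  proof -
    have "norm (D k) \<le> norm (g k)" using norm_D_le[of "g k" "D k" "H k"] DH[of k] by blast
    moreover have "norm (g k) \<le> B" using B by blast
    ultimately show ?thesis by linarith
  qed
  then have "bounded (range D)" by (auto simp: bounded_iff)
  then obtain Dl r where r: "strict_mono r" "(D \<circ> r) \<longlonglongrightarrow> Dl"
    using bounded_imp_convergent_subsequence by blast
  define Hl where "Hl = S - Dl"
  have "(g \<circ> r) \<longlonglongrightarrow> S" using LIMSEQ_subseq_LIMSEQ[OF gS r(1)] .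
  then have "(\<lambda>k. (g \<circ> r) k - (D \<circ> r) k) \<longlonglongrightarrow> Hl"
    unfolding Hl_def by (intro tendsto_diff r(2))
  moreover have "(\<lambda>k. (g \<circ> r) k - (D \<circ> r) k) = H \<circ> r"
    using DH by (auto simp: fun_eq_iff)
  ultimately have Hlim: "(H \<circ> r) \<longlonglongrightarrow> Hl" by simp
  have "psd Dl" by (rule psd_limit[OF r(2)]) (use DH in simp)
  moreover have "diagonal_mat Dl" by (rule diag_limit[OF r(2)]) (use DH in simp)
  moreover have "psd Hl" by (rule psd_limit[OF Hlim]) (use DH in simp)
  moreover obtain d where d: "d > 0" "\<forall>H'. dist H' Hl < d \<longrightarrow> rank Hl \<le> rank H'"
    using rank_lsc by blast
  moreover obtain k where "dist ((H \<circ> r) k) Hl < d"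
    using Hlim d(1) unfolding lim_sequentially by blast
  ultimately show ?thesis unfolding Hl_def by (intro exI[of _ Dl] exI[of _ "S - Dl"] exI[of _ "r k"]) auto
qed

lemma lsc_mr_plus: "lower_semicontinuous_on (psd_set :: (real^'n^'n) set) (\<lambda>S. real (mr_plus S))"
  unfolding lower_semicontinuous_on_def
proof (intro ballI allI impI)
  fix S :: "real^'n^'n" and t assume S: "S \<in> psd_set" and t: "t < real (mr_plus S)"
  show "\<forall>\<^sub>F y in at S within psd_set. t < real (mr_plus y)"
  proof (rule sequentially_imp_eventually_within, intro allI impI)
    fix f :: "nat \<Rightarrow> real^'n^'n" assume f: "(\<forall>n. f n \<in> psd_set \<and> f n \<noteq> S) \<and> f \<longlonglongrightarrow> S"
    show "\<forall>\<^sub>F n in sequentially. t < real (mr_plus (f n))"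
    proof (rule ccontr)
      assume ne: "\<not> (\<forall>\<^sub>F n in sequentially. t < real (mr_plus (f n)))"
      define P where "P = {n. \<not> t < real (mr_plus (f n))}"
      have inf: "infinite P" using ne
        by (simp add: P_def cofinite_eq_sequentially[symmetric] eventually_cofinite)
      define r where "r = enumerate P"
      have r: "strict_mono r" "\<And>k. r k \<in> P"
        using strict_mono_enumerate[OF inf] enumerate_in_set[OF inf] by (auto simp: r_def)
      define g where "g = f \<circ> r"
      have g: "g \<longlonglongrightarrow> S" unfolding g_def using LIMSEQ_subseq_LIMSEQ[OF _ r(1)] f by blast
      have gpsd: "psd (g k)" for k using f by (simp add: g_def psd_set_def)
      have "\<forall>k. \<exists>D H. g k = D + H \<and> psd D \<and> psd H \<and> diagonal_mat D \<and> rank H = mr_plus (g k)"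
      proof
        fix k show "\<exists>D H. g k = D + H \<and> psd D \<and> psd H \<and> diagonal_mat D \<and> rank H = mr_plus (g k)"
          using mrp_in[OF gpsd[of k]] by force
      qed
      then obtain D H where DH: "\<And>k. g k = D k + H k \<and> psd (D k) \<and> psd (H k) \<and> diagonal_mat (D k) \<and> rank (H k) = mr_plus (g k)"
        by metis
      obtain Dl Hl k where L: "S = Dl + Hl" "psd Dl" "psd Hl" "diagonal_mat Dl" "rank Hl \<le> rank (H k)"
        using core[OF g, of D H] DH by blast
      have "mr_plus S \<le> rank (H k)" using mrp_le[OF L(1-4)] L(5) by linarith
      also have "\<dots> = mr_plus (f (r k))" using DH[of k] by (simp add: g_def)
      finally have "real (mr_plus S) \<le> real (mr_plus (f (r k)))" by simp
      also have "\<dots> \<le> t" using r(2)[of k] by (simp add: P_def)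
      finally show False using t by simp
    qed
  qed
qed

definition SA :: "real \<Rightarrow> real^3^3" where
  "SA a = vector [vector [3, a, 1], vector [a, 3, 1], vector [1, 1, 3]]"

definition HV :: "real^3 \<Rightarrow> real^3^3" where
  "HV v = (\<chi> i j. v$i * v$j)"

lemma three_ne: "(1::3) \<noteq> 2" "(1::3) \<noteq> 3" "(2::3) \<noteq> 3" "(2::3) \<noteq> 1" "(3::3) \<noteq> 1" "(3::3) \<noteq> 2"
  by simp_all

lemma SA_form:
  "x \<bullet> (SA a *v x) = 3*(x$1)^2 + 3*(x$2)^2 + 3*(x$3)^2 + 2*a*(x$1)*(x$2) + 2*(x$1)*(x$3) + 2*(x$2)*(x$3)"
  by (simp add: SA_def inner_vec_def matrix_vector_mult_def sum_3 power2_eq_square algebra_simps)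

lemma psd_SA:
  assumes "0 \<le> a" "a \<le> 1"
  shows "psd (SA a)"
proof -
  have "symmetric_mat (SA a)"
    by (simp add: symmetric_mat_def vec_eq_iff forall_3 transpose_def SA_def)
  moreover have "0 \<le> x \<bullet> (SA a *v x)" for x
  proof -
    have a2: "a^2 \<le> 1" using assms by (simp add: power_le_one)
    have "x \<bullet> (SA a *v x) = (x$1+x$3)^2 + (x$2+x$3)^2 + (x$1 + a*x$2)^2 + (x$1)^2 + (2 - a^2)*(x$2)^2 + (x$3)^2"
      unfolding SA_form by (simp add: power2_eq_square algebra_simps)
    moreover have "0 \<le> (2 - a^2)*(x$2)^2" using a2 by simp
    ultimately show ?thesis by (simp add: add_nonneg_nonneg)
  qed
  ultimately show ?thesis by (simp add: psd_def)
qed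

lemma HV_form: "x \<bullet> (HV v *v x) = (v$1*x$1 + v$2*x$2 + v$3*x$3)^2"
  by (simp add: HV_def inner_vec_def matrix_vector_mult_def sum_3 power2_eq_square algebra_simps)

lemma psd_HV: "psd (HV v)"
proof -
  have "symmetric_mat (HV v)" by (simp add: symmetric_mat_def vec_eq_iff transpose_def HV_def mult.commute)
  moreover have "0 \<le> x \<bullet> (HV v *v x)" for x unfolding HV_form by simp
  ultimately show ?thesis by (simp add: psd_def)
qed

lemma rank_HV: "rank (HV v) \<le> 1"
proof -
  have "HV v *v x = (v$1*x$1 + v$2*x$2 + v$3*x$3) *\<^sub>R v" for x
    by (simp add: HV_def vec_eq_iff forall_3 matrix_vector_mult_def sum_3 algebra_simps)
  then have "range (\<lambda>x. HV v *v x) \<subseteq> span {v}"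
    by (auto intro: span_mul span_base)
  then have "dim (range (\<lambda>x. HV v *v x)) \<le> dim (span {v})" by (rule dim_subset)
  also have "\<dots> \<le> 1" by simp
  finally show ?thesis by (simp add: rank_dim_range)
qed

lemma mr_SA_small:
  assumes "0 < a"
  shows "mr (SA a) \<le> 1"
proof -
  define v :: "real^3" where "v = vector [sqrt a, sqrt a, 1 / sqrt a]"
  have sa: "sqrt a * sqrt a = a" "sqrt a \<noteq> 0" using assms by simp_all
  have "diagonal_mat (SA a - HV v)"
    unfolding diagonal_mat_def using sa
    by (simp add: forall_3 three_ne SA_def HV_def v_def)
  then have "mr (SA a) \<le> rank (HV v)"
    by (intro mr_le[of _ "SA a - HV v"]) (simp_all add: psd_HV)
  then show ?thesis using rank_HV[of v] by linarith
qed

lemma rank_ge2: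
  fixes D H :: "real^3^3"
  assumes "SA 0 = D + H" "diagonal_mat D"
  shows "2 \<le> rank H"
proof -
  have Hij: "H $ i $ j = SA 0 $ i $ j - D $ i $ j" for i j
    using assms(1) by (simp add: vec_eq_iff algebra_simps)
  have D0: "D $ i $ j = 0" if "i \<noteq> j" for i j using assms(2) that by (simp add: diagonal_mat_def)
  define u where "u = H *v axis 1 1"
  define w where "w = H *v axis 3 1"
  have u2: "u $ 2 = 0" and u3: "u $ 3 = 1" and w2: "w $ 2 = 1"
    by (simp_all add: u_def w_def matrix_vector_mult_basis column_def Hij D0 three_ne SA_def)
  have "w \<noteq> 0" using w2 by auto
  then have iw: "independent {w}" by (simp add: independent_insert)
  have "u \<notin> span {w}"
  proof
    assume "u \<in> span {w}"
    then obtain k where "u = k *\<^sub>R w" by (auto simp: span_singleton)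
    then have "u $ 2 = k * w $ 2" "u $ 3 = k * w $ 3" by simp_all
    then show False using u2 u3 w2 by simp
  qed
  then have ind: "independent {u, w}" using iw by (simp add: independent_insert)
  have uw: "u \<noteq> w" using u2 w2 by auto
  have "card {u, w} \<le> dim (range (\<lambda>x. H *v x))"
    by (rule independent_card_le_dim[OF _ ind]) (auto simp: u_def w_def)
  then show ?thesis using uw by (simp add: rank_dim_range)
qed

lemma mr_SA0: "2 \<le> mr (SA 0)"
proof -
  have "psd (SA 0)" by (rule psd_SA) simp_all
  then have ne: "{rank H | D H. SA 0 = D + H \<and> psd H \<and> diagonal_mat D} \<noteq> {}" by (rule mr_ne)
  show ?thesis
    unfolding mr_def using Min_ge_iff[OF mr_finite ne] rank_ge2 by auto
qed

lemma not_lsc_mr: "\<not> lower_semicontinuous_on (psd_set :: (real^3^3) set) (\<lambda>S. real (mr S))"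
proof
  assume lsc: "lower_semicontinuous_on (psd_set :: (real^3^3) set) (\<lambda>S. real (mr S))"
  have S0: "SA 0 \<in> psd_set" using psd_SA[of 0] by (simp add: psd_set_def)
  have "3/2 < real (mr (SA 0))" using mr_SA0 by simp
  then have ev: "\<forall>\<^sub>F y in at (SA 0) within psd_set. 3/2 < real (mr y)"
    using lsc S0 unfolding lower_semicontinuous_on_def by blast
  define a where "a k = inverse (real (Suc k))" for k
  have a: "0 < a k" "a k \<le> 1" for k by (simp_all add: a_def inverse_eq_divide)
  have aff: "SA b = SA 0 + b *\<^sub>R (SA 1 - SA 0)" for b
    by (simp add: SA_def vec_eq_iff forall_3)
  have "(\<lambda>k. SA 0 + a k *\<^sub>R (SA 1 - SA 0)) \<longlonglongrightarrow> SA 0 + 0 *\<^sub>R (SA 1 - SA 0)"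
    unfolding a_def by (intro tendsto_intros LIMSEQ_inverse_real_of_nat)
  then have lim: "(\<lambda>k. SA (a k)) \<longlonglongrightarrow> SA 0" by (simp add: aff[symmetric])
  have ne: "SA (a k) \<noteq> SA 0" for k
  proof
    assume "SA (a k) = SA 0"
    then have "SA (a k) $ 1 $ 2 = SA 0 $ 1 $ 2" by simp
    then show False using a(1)[of k] by (simp add: SA_def)
  qed
  have "filterlim (\<lambda>k. SA (a k)) (at (SA 0) within psd_set) sequentially"
    unfolding filterlim_at using lim ne psd_SA a by (auto simp: psd_set_def less_imp_le)
  from eventually_compose_filterlim[OF ev this]
  have "\<forall>\<^sub>F k in sequentially. 3/2 < real (mr (SA (a k)))" .
  then obtain k where "3/2 < real (mr (SA (a k)))" using eventually_sequentially by auto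
  moreover have "mr (SA (a k)) \<le> 1" using mr_SA_small a by blast
  then have "real (mr (SA (a k))) \<le> 1" by simp
  ultimately show False by linarith
qed

theorem proposition1:
  shows "lower_semicontinuous_on (psd_set :: (real^'n^'n) set) (\<lambda>S. real (mr_plus S))
         \<and> \<not> lower_semicontinuous_on (psd_set :: (real^3^3) set) (\<lambda>S. real (mr S))"
  by (rule conjI[OF lsc_mr_plus not_lsc_mr])

end
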